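(* Let $u(t)=\sum_{i=1}^M s_i(t)e^{j2\pi f_it}$ be a signal in the class $\mathcal{M}_2$ described in the context, and consider an L-shaped array with $2N-1$ sensors ($N$ sensors along each of the $x$ and $z$ axes, with a common sensor at the origin) and distance $d$ between adjacent sensors, with the sampling system described in the context, producing $\mathbf{x}[k]=\mathbf{A}_x(\boldsymbol{f},\boldsymbol{\theta})\mathbf{w}[k]$ and $\mathbf{z}[k]=\mathbf{A}_z(\boldsymbol{f},\boldsymbol{\theta})\mathbf{w}[k]$, $k\in\mathbb{Z}$. If (c1) $d<\frac{c}{f_{\text{Nyq}}}$ and (c2) $N>M$, then this pair of equations has a unique solution $(\boldsymbol{f},\boldsymbol{\theta},\mathbf{w})$ (up to a common relabeling of the transmissions), where $\boldsymbol{f}=(f_1,\dots,f_M)^T$ and $\boldsymbol{\theta}=(\theta_1,\dots,\theta_M)^T$.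
   Context: Class $\mathcal{M}_2$: $u$ is complex valued with Fourier transform supported in $[-f_{\text{Nyq}}/2,f_{\text{Nyq}}/2]$, each $s_i$ has Fourier transform supported in $[-B/2,B/2]$, $\min_{i\neq j}|f_i-f_j|>B$; the $s_i$ are wide-sense stationary, zero mean, mutually uncorrelated, with $\mathbb{E}[|s_i(t)|^2]\neq 0$; transmission $i$ lies in the $xz$-plane with unknown angle of arrival $\theta_i$, $|\theta_i|<90^\circ$, and $f_i\cos\theta_i\neq f_j\cos\theta_j$, $f_i\sin\theta_i\neq f_j\sin\theta_j$ for $i\neq j$. $c>0$ is the propagation speed. Each sensor multiplies its received signal by the same periodic function $p(t)$, applies an ideal low-pass filter and samples at rate $f_s$. With $\tau_n^x(\theta)=\frac{dn}{c}\cos\theta$ and $\tau_n^z(\theta)=\frac{dn}{c}\sin\theta$, $(\mathbf{A}_x)_{n,i}=e^{j2\pi f_i\tau_n^x(\theta_i)}$ and $(\mathbf{A}_z)_{n,i}=e^{j2\pi f_i\tau_n^z(\theta_i)}$ for $n=1,\dots,N$, $i=1,\dots,M$; $\mathbf{w}[k]\in\mathbb{C}^M$ has entries $w_i[k]=\tilde s_i(k/f_s)$, where $\tilde s_i$ is the filtered version of $s_i(t)e^{j2\pi f_it}p(t)$, and $\mathbb{E}[\mathbf{w}\mathbf{w}^H]$ is diagonal with nonzero diagonal entries. *)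

theory Defs
  imports "HOL-Probability.Probability"
begin

text \<open>Transmissions are indexed by
  i < M (0-based), sensors on each axis by n = 1..N.\<close>

definition tau_x :: "real \<Rightarrow> real \<Rightarrow> nat \<Rightarrow> real \<Rightarrow> real" where
  "tau_x d c n \<theta> = d * real n / c * cos \<theta>"

definition tau_z :: "real \<Rightarrow> real \<Rightarrow> nat \<Rightarrow> real \<Rightarrow> real" where
  "tau_z d c n \<theta> = d * real n / c * sin \<theta>"

definition A_x :: "real \<Rightarrow> real \<Rightarrow> (nat \<Rightarrow> real) \<Rightarrow> (nat \<Rightarrow> real) \<Rightarrow> nat \<Rightarrow> nat \<Rightarrow> complex" where
  "A_x d c f \<theta> n i = cis (2 * pi * f i * tau_x d c n (\<theta> i))"

definition A_z :: "real \<Rightarrow> real \<Rightarrow> (nat \<Rightarrow> real) \<Rightarrow> (nat \<Rightarrow> real) \<Rightarrow> nat \<Rightarrow> nat \<Rightarrow> complex" where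
  "A_z d c f \<theta> n i = cis (2 * pi * f i * tau_z d c n (\<theta> i))"

text \<open>Matrix-vector product (A w[k])_n = sum_{i<M} A_{n,i} w_i[k], for each outcome omega.
  w i k omega is the i-th entry of the random vector w[k].\<close>

definition mat_apply :: "nat \<Rightarrow> (nat \<Rightarrow> nat \<Rightarrow> complex) \<Rightarrow> (nat \<Rightarrow> int \<Rightarrow> 'w \<Rightarrow> complex)
    \<Rightarrow> nat \<Rightarrow> int \<Rightarrow> 'w \<Rightarrow> complex" where
  "mat_apply M A w n k \<omega> = (\<Sum>i<M. A n i * w i k \<omega>)"

definition diag_nonzero_cov :: "'w measure \<Rightarrow> nat \<Rightarrow> (nat \<Rightarrow> int \<Rightarrow> 'w \<Rightarrow> complex) \<Rightarrow> bool" where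
  "diag_nonzero_cov P M w \<longleftrightarrow>
     (\<forall>k::int. \<forall>i<M. \<forall>l<M.
        integrable P (\<lambda>\<omega>. w i k \<omega> * cnj (w l k \<omega>)) \<and>
        (i \<noteq> l \<longrightarrow> (\<integral>\<omega>. w i k \<omega> * cnj (w l k \<omega>) \<partial>P) = 0) \<and>
        (i = l \<longrightarrow> (\<integral>\<omega>. w i k \<omega> * cnj (w l k \<omega>) \<partial>P) \<noteq> 0))"

definition admissible :: "'w measure \<Rightarrow> real \<Rightarrow> real \<Rightarrow> nat \<Rightarrow> (nat \<Rightarrow> real) \<Rightarrow> (nat \<Rightarrow> real)
    \<Rightarrow> (nat \<Rightarrow> int \<Rightarrow> 'w \<Rightarrow> complex) \<Rightarrow> bool" where
  "admissible P fNyq B M f \<theta> w \<longleftrightarrow>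
     (\<forall>i<M. \<bar>f i\<bar> \<le> fNyq / 2) \<and>
     (\<forall>i<M. \<bar>\<theta> i\<bar> < pi / 2) \<and>
     (\<forall>i<M. \<forall>j<M. i \<noteq> j \<longrightarrow>
        \<bar>f i - f j\<bar> > B \<and>
        f i * cos (\<theta> i) \<noteq> f j * cos (\<theta> j) \<and>
        f i * sin (\<theta> i) \<noteq> f j * sin (\<theta> j)) \<and>
     diag_nonzero_cov P M w"

end

theory Submission imports Defs "HOL-Computational_Algebra.Polynomial" begin

lemma vander_set:
  fixes S :: "complex set" and c :: "complex \<Rightarrow> complex"
  assumes fin: "finite S" and cardS: "card S \<le> K"
    and eqs: "\<forall>j<K. (\<Sum>t\<in>S. c t * t ^ j) = 0" and sS: "s \<in> S"
  shows "c s = 0"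
proof -
  define p where "p = (\<Prod>t\<in>S - {s}. [:-t, 1:])"
  have degp: "degree p = card (S - {s})"
    unfolding p_def by (subst degree_prod_eq_sum_degree) (auto simp: fin)
  have degK: "degree p < K" using degp cardS sS fin
    by (metis card_Diff1_less le_less_trans linorder_not_le order.strict_trans1)
  have "(\<Sum>t\<in>S. c t * poly p t) = (\<Sum>t\<in>S. \<Sum>i\<le>degree p. coeff p i * (c t * t ^ i))"
    by (simp add: poly_altdef sum_distrib_left mult.assoc mult.left_commute)
  also have "\<dots> = (\<Sum>i\<le>degree p. coeff p i * (\<Sum>t\<in>S. c t * t ^ i))"
    by (subst sum.swap) (simp add: sum_distrib_left)
  also have "\<dots> = 0" using eqs degK by (intro sum.neutral) auto
  finally have A: "(\<Sum>t\<in>S. c t * poly p t) = 0" .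
  have "(\<Sum>t\<in>S. c t * poly p t) = c s * poly p s + (\<Sum>t\<in>S - {s}. c t * poly p t)"
    using fin sS by (simp add: sum.remove)
  also have "(\<Sum>t\<in>S - {s}. c t * poly p t) = 0"
    unfolding p_def using fin
    by (intro sum.neutral) (auto simp: poly_prod prod_zero_iff)
  finally have B: "c s * poly p s = 0" using A by simp
  have "poly p s \<noteq> 0" unfolding p_def using fin by (auto simp: poly_prod prod_zero_iff)
  with B show ?thesis by simp
qed

lemma vander_idx:
  fixes a :: "nat \<Rightarrow> complex" and c :: "nat \<Rightarrow> complex"
  assumes inj: "inj_on a A" and fin: "finite A" and cardA: "card A \<le> K"
    and eqs: "\<forall>j<K. (\<Sum>i\<in>A. c i * a i ^ j) = 0" and iA: "i \<in> A"
  shows "c i = 0"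
proof -
  define c' where "c' = (\<lambda>s. c (inv_into A a s))"
  have "c' (a i) = 0"
  proof (rule vander_set[of "a ` A" K c' "a i"])
    show "finite (a ` A)" using fin by simp
    show "card (a ` A) \<le> K" using cardA by (simp add: card_image inj)
    show "\<forall>j<K. (\<Sum>t\<in>a ` A. c' t * t ^ j) = 0"
    proof (intro allI impI)
      fix j assume "j < K"
      have "(\<Sum>t\<in>a ` A. c' t * t ^ j) = (\<Sum>i\<in>A. c' (a i) * a i ^ j)"
        by (simp add: sum.reindex inj)
      also have "\<dots> = (\<Sum>i\<in>A. c i * a i ^ j)"
        by (rule sum.cong) (auto simp: c'_def inv_into_f_f inj)
      finally show "(\<Sum>t\<in>a ` A. c' t * t ^ j) = 0" using eqs \<open>j < K\<close> by simp
    qed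
    show "a i \<in> a ` A" using iA by simp
  qed
  thus ?thesis by (simp add: c'_def inv_into_f_f inj iA)
qed


lemma A_x_pow: "c \<noteq> 0 \<Longrightarrow> A_x d c f \<theta> n i = (cis (2*pi*(f i * cos (\<theta> i))*d/c)) ^ n"
  unfolding A_x_def tau_x_def by (subst Complex.DeMoivre) (rule arg_cong[where f=cis], simp add: field_simps)

lemma A_z_pow: "c \<noteq> 0 \<Longrightarrow> A_z d c f \<theta> n i = (cis (2*pi*(f i * sin (\<theta> i))*d/c)) ^ n"
  unfolding A_z_def tau_z_def by (subst Complex.DeMoivre) (rule arg_cong[where f=cis], simp add: field_simps)

lemma phase_inj:
  fixes p q c d fNyq :: real
  assumes "c > 0" "d > 0" "fNyq > 0" "d < c / fNyq" "\<bar>p\<bar> \<le> fNyq/2" "\<bar>q\<bar> \<le> fNyq/2"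
    and eq: "cis (2*pi*p*d/c) = cis (2*pi*q*d/c)"
  shows "p = q"
proof -
  have dc: "d * fNyq < c" using assms(3,4) pos_less_divide_eq by blast
  have bnd: "\<bar>2*pi*y*d/c\<bar> < pi" if "\<bar>y\<bar> \<le> fNyq/2" for y
  proof -
    have "\<bar>y\<bar> * d \<le> fNyq/2 * d" using that assms by (intro mult_right_mono) auto
    also have "\<dots> < c/2" using dc by (simp add: field_simps mult_ac)
    finally have "\<bar>y\<bar> * d / c < 1/2" using assms by (simp add: field_simps)
    hence "2*pi*(\<bar>y\<bar> * d / c) < 2*pi*(1/2)" by (intro mult_strict_left_mono) auto
    moreover have "\<bar>2*pi*y*d/c\<bar> = 2*pi*(\<bar>y\<bar> * d / c)" using assms by (simp add: abs_mult)
    ultimately show ?thesis by simp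
  qed
  have inr: "t \<in> {-pi<..pi}" if "\<bar>t\<bar> < pi" for t using that by auto
  have "Arg (cis (2*pi*p*d/c)) = 2*pi*p*d/c"
    by (intro Arg_cis inr bnd assms(5))
  moreover have "Arg (cis (2*pi*q*d/c)) = 2*pi*q*d/c"
    by (intro Arg_cis inr bnd assms(6))
  ultimately have "2*pi*p*d/c = 2*pi*q*d/c" using eq by metis
  hence "(2*pi*d/c) * p = (2*pi*d/c) * q" by (simp add: mult_ac)
  moreover have "2*pi*d/c \<noteq> 0" using assms by simp
  ultimately show ?thesis by simp
qed

lemma cov_lemma:
  assumes "diag_nonzero_cov P M w"
  shows "(\<integral>\<omega>. mat_apply M A w n k \<omega> * cnj (mat_apply M B w m k \<omega>) \<partial>P)
        = (\<Sum>i<M. A n i * cnj (B m i) * (\<integral>\<omega>. w i k \<omega> * cnj (w i k \<omega>) \<partial>P))"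
proof -
  have I: "\<And>i l. i < M \<Longrightarrow> l < M \<Longrightarrow> integrable P (\<lambda>\<omega>. w i k \<omega> * cnj (w l k \<omega>))"
    using assms unfolding diag_nonzero_cov_def by blast
  have Z: "\<And>i l. i < M \<Longrightarrow> l < M \<Longrightarrow> i \<noteq> l \<Longrightarrow> (\<integral>\<omega>. w i k \<omega> * cnj (w l k \<omega>) \<partial>P) = 0"
    using assms unfolding diag_nonzero_cov_def by blast
  have eqf: "(\<lambda>\<omega>. mat_apply M A w n k \<omega> * cnj (mat_apply M B w m k \<omega>))
       = (\<lambda>\<omega>. \<Sum>i<M. \<Sum>l<M. (A n i * cnj (B m l)) * (w i k \<omega> * cnj (w l k \<omega>)))"
    unfolding mat_apply_def cnj_sum complex_cnj_mult sum_product
    by (auto simp: mult_ac intro!: sum.cong ext)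
  have "(\<integral>\<omega>. mat_apply M A w n k \<omega> * cnj (mat_apply M B w m k \<omega>) \<partial>P)
      = (\<Sum>i<M. \<Sum>l<M. (A n i * cnj (B m l)) * (\<integral>\<omega>. w i k \<omega> * cnj (w l k \<omega>) \<partial>P))"
    unfolding eqf
    apply (subst Bochner_Integration.integral_sum)
     apply (auto intro!: integrable_sum integrable_mult_right I)[1]
    apply (rule sum.cong[OF refl])
    apply (subst Bochner_Integration.integral_sum)
     apply (auto intro!: integrable_mult_right I)[1]
    apply (rule sum.cong[OF refl])
    apply simp
    done
  also have "\<dots> = (\<Sum>i<M. A n i * cnj (B m i) * (\<integral>\<omega>. w i k \<omega> * cnj (w i k \<omega>) \<partial>P))"
  proof (rule sum.cong[OF refl])
    fix i assume "i \<in> {..<M}"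
    hence "(\<Sum>l<M. (A n i * cnj (B m l)) * (\<integral>\<omega>. w i k \<omega> * cnj (w l k \<omega>) \<partial>P))
        = (\<Sum>l\<in>{i}. (A n i * cnj (B m l)) * (\<integral>\<omega>. w i k \<omega> * cnj (w l k \<omega>) \<partial>P))"
      using Z by (intro sum.mono_neutral_right) auto
    thus "(\<Sum>l<M. (A n i * cnj (B m l)) * (\<integral>\<omega>. w i k \<omega> * cnj (w l k \<omega>) \<partial>P))
        = A n i * cnj (B m i) * (\<integral>\<omega>. w i k \<omega> * cnj (w i k \<omega>) \<partial>P)" by simp
  qed
  finally show ?thesis .
qed

lemma polar_unique:
  fixes f g a b :: real
  assumes "f \<noteq> 0" "\<bar>a\<bar> < pi/2" "\<bar>b\<bar> < pi/2"
    "f * cos a = g * cos b" "f * sin a = g * sin b"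
  shows "f = g \<and> a = b"
proof -
  have ca: "cos a > 0" using assms by (intro cos_gt_zero_pi) auto
  have cb: "cos b > 0" using assms by (intro cos_gt_zero_pi) auto
  have "g \<noteq> 0" using assms ca by auto
  have "tan a = (f * sin a) / (f * cos a)" using assms(1) by (simp add: tan_def)
  also have "\<dots> = (g * sin b) / (g * cos b)" by (simp only: assms(4) assms(5))
  also have "\<dots> = tan b" using \<open>g \<noteq> 0\<close> by (simp add: tan_def)
  finally have "tan a = tan b" .
  hence "arctan (tan a) = arctan (tan b)" by simp
  hence ab: "a = b" using assms by (simp add: arctan_tan)
  thus ?thesis using assms ca by simp
qed


lemma unit_pow_shift:
  fixes \<alpha> :: complex
  assumes u: "\<alpha> * cnj \<alpha> = 1" and pq: "p + m = q + n"
  shows "\<alpha> ^ p * cnj \<alpha> ^ q = \<alpha> ^ n * cnj \<alpha> ^ m"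
proof -
  have "\<alpha> ^ p * cnj \<alpha> ^ q = \<alpha> ^ p * cnj \<alpha> ^ q * (\<alpha> * cnj \<alpha>) ^ n" using u by simp
  also have "\<dots> = \<alpha> ^ (p + n) * cnj \<alpha> ^ (q + n)" by (simp add: power_add power_mult_distrib)
  also have "\<dots> = \<alpha> ^ (n + p) * cnj \<alpha> ^ (m + p)" using pq by (simp add: add.commute)
  also have "\<dots> = \<alpha> ^ n * cnj \<alpha> ^ m * (\<alpha> * cnj \<alpha>) ^ p" by (simp add: power_add power_mult_distrib)
  also have "\<dots> = \<alpha> ^ n * cnj \<alpha> ^ m" using u by simp
  finally show ?thesis .
qed

lemma regroup:
  fixes g :: "nat \<Rightarrow> complex" and D :: "nat \<Rightarrow> complex"
  assumes "finite A" "finite S" "g ` A \<subseteq> S"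
  shows "(\<Sum>i\<in>A. D i * cnj (g i) ^ q * g i ^ j)
       = (\<Sum>t\<in>S. (\<Sum>i\<in>{i\<in>A. g i = t}. D i) * cnj t ^ q * t ^ j)"
proof -
  have "(\<Sum>t\<in>S. (\<Sum>i\<in>{i\<in>A. g i = t}. D i) * cnj t ^ q * t ^ j)
      = (\<Sum>t\<in>S. (\<Sum>i\<in>{i\<in>A. g i = t}. D i * cnj (g i) ^ q * g i ^ j))"
    by (rule sum.cong[OF refl]) (auto simp: sum_distrib_right intro!: sum.cong)
  also have "\<dots> = (\<Sum>i\<in>A. D i * cnj (g i) ^ q * g i ^ j)"
    using assms by (rule sum.group)
  finally show ?thesis by simp
qed

lemma match_nodes:
  fixes a a' :: "nat \<Rightarrow> complex" and D D' :: "nat \<Rightarrow> complex"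
  assumes inj: "inj_on a {..<M}" and inj': "inj_on a' {..<M}"
    and u: "\<forall>i. a i * cnj (a i) = 1" and u': "\<forall>i. a' i * cnj (a' i) = 1"
    and NM: "N > M" and D'nz: "\<forall>i<M. D' i \<noteq> 0"
    and E: "\<forall>n\<in>{1..N}. \<forall>m\<in>{1..N}. (\<Sum>i<M. a i ^ n * cnj (a i ^ m) * D i)
                                   = (\<Sum>i<M. a' i ^ n * cnj (a' i ^ m) * D' i)"
  shows "\<forall>i<M. \<exists>j<M. a j = a' i"
proof -
  let ?q = "N - 1"
  have shift: "\<alpha> ^ j * cnj \<alpha> ^ ?q = (if j \<le> N - 1 then \<alpha> ^ 1 * cnj \<alpha> ^ (N - j)
                 else \<alpha> ^ (j + 2 - N) * cnj \<alpha> ^ 1)"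
    if "\<alpha> * cnj \<alpha> = 1" "j < 2 * N - 1" for \<alpha> :: complex and j
  proof (cases "j \<le> N - 1")
    case True
    have "\<alpha> ^ j * cnj \<alpha> ^ ?q = \<alpha> ^ 1 * cnj \<alpha> ^ (N - j)"
      by (rule unit_pow_shift[OF that(1)]) (use True NM in simp)
    thus ?thesis using True by simp
  next
    case False
    have "\<alpha> ^ j * cnj \<alpha> ^ ?q = \<alpha> ^ (j + 2 - N) * cnj \<alpha> ^ 1"
      by (rule unit_pow_shift[OF that(1)]) (use False NM that(2) in simp)
    thus ?thesis using False by simp
  qed
  have E2: "(\<Sum>i<M. D i * cnj (a i) ^ ?q * a i ^ j) = (\<Sum>i<M. D' i * cnj (a' i) ^ ?q * a' i ^ j)"
    if j: "j < 2 * N - 1" for j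
  proof -
    define n where "n = (if j \<le> N - 1 then 1 else j + 2 - N)"
    define m where "m = (if j \<le> N - 1 then N - j else 1)"
    have nm: "n \<in> {1..N}" "m \<in> {1..N}" using j NM by (auto simp: n_def m_def)
    have sh: "\<alpha> ^ j * cnj \<alpha> ^ ?q = \<alpha> ^ n * cnj \<alpha> ^ m" if "\<alpha> * cnj \<alpha> = 1" for \<alpha>
      using shift[OF that j] by (simp add: n_def m_def)
    have "(\<Sum>i<M. D i * cnj (a i) ^ ?q * a i ^ j) = (\<Sum>i<M. a i ^ n * cnj (a i ^ m) * D i)"
      by (rule sum.cong[OF refl]) (use sh u in \<open>simp add: mult_ac\<close>)
    also have "\<dots> = (\<Sum>i<M. a' i ^ n * cnj (a' i ^ m) * D' i)" using E nm by blast
    also have "\<dots> = (\<Sum>i<M. D' i * cnj (a' i) ^ ?q * a' i ^ j)"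
      by (rule sum.cong[OF refl]) (use sh u' in \<open>simp add: mult_ac\<close>)
    finally show ?thesis .
  qed
  define S where "S = a ` {..<M} \<union> a' ` {..<M}"
  have finS: "finite S" unfolding S_def by simp
  have cardS: "card S \<le> 2 * N - 1"
  proof -
    have "card S \<le> card (a ` {..<M}) + card (a' ` {..<M})" unfolding S_def by (rule card_Un_le)
    also have "\<dots> \<le> M + M" by (intro add_mono) (simp_all add: card_image inj inj')
    finally show ?thesis using NM by simp
  qed
  define G where "G = (\<lambda>t. (\<Sum>i\<in>{i\<in>{..<M}. a i = t}. D i))"
  define G' where "G' = (\<lambda>t. (\<Sum>i\<in>{i\<in>{..<M}. a' i = t}. D' i))"
  have V: "(G t - G' t) * cnj t ^ ?q = 0" if "t \<in> S" for t
  proof (rule vander_set[of S "2 * N - 1" "\<lambda>t. (G t - G' t) * cnj t ^ ?q" t, OF finS cardS _ that],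
         intro allI impI)
    fix j assume j: "j < 2 * N - 1"
    have "(\<Sum>t\<in>S. (G t - G' t) * cnj t ^ ?q * t ^ j)
        = (\<Sum>t\<in>S. G t * cnj t ^ ?q * t ^ j) - (\<Sum>t\<in>S. G' t * cnj t ^ ?q * t ^ j)"
      by (simp add: sum_subtractf algebra_simps)
    also have "(\<Sum>t\<in>S. G t * cnj t ^ ?q * t ^ j) = (\<Sum>i<M. D i * cnj (a i) ^ ?q * a i ^ j)"
      unfolding G_def by (rule regroup[symmetric]) (auto simp: finS S_def)
    also have "(\<Sum>t\<in>S. G' t * cnj t ^ ?q * t ^ j) = (\<Sum>i<M. D' i * cnj (a' i) ^ ?q * a' i ^ j)"
      unfolding G'_def by (rule regroup[symmetric]) (auto simp: finS S_def)
    finally show "(\<Sum>t\<in>S. (G t - G' t) * cnj t ^ ?q * t ^ j) = 0" using E2[OF j] by simp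
  qed
  show ?thesis
  proof (intro allI impI)
    fix i assume i: "i < M"
    have tS: "a' i \<in> S" using i by (simp add: S_def)
    have "cnj (a' i) \<noteq> 0" using u' by (metis mult_zero_right zero_neq_one)
    hence "G (a' i) = G' (a' i)" using V[OF tS] by simp
    moreover have "{j\<in>{..<M}. a' j = a' i} = {i}" using inj' i by (auto dest: inj_onD)
    hence "G' (a' i) = D' i" by (simp add: G'_def)
    ultimately have "G (a' i) \<noteq> 0" using D'nz i by simp
    hence "{j\<in>{..<M}. a j = a' i} \<noteq> {}" unfolding G_def by (metis sum.empty)
    thus "\<exists>j<M. a j = a' i" by auto
  qed
qed

lemma w_ident:
  fixes a :: "nat \<Rightarrow> complex" and v v' :: "nat \<Rightarrow> complex"
  assumes inj: "inj_on a {..<M}" and nz: "\<forall>i. a i \<noteq> 0" and \<sigma>: "\<sigma> permutes {..<M}"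
    and NM: "N \<ge> M"
    and E: "\<forall>n\<in>{1..N}. (\<Sum>i<M. a i ^ n * v i) = (\<Sum>i<M. a (\<sigma> i) ^ n * v' i)"
  shows "\<forall>i<M. v' i = v (\<sigma> i)"
proof -
  define u where "u = (\<lambda>j. v' (inv \<sigma> j))"
  have R: "(\<Sum>i<M. a (\<sigma> i) ^ n * v' i) = (\<Sum>j<M. a j ^ n * u j)" for n
  proof -
    have "(\<Sum>j<M. a j ^ n * u j) = (\<Sum>i<M. a (\<sigma> i) ^ n * u (\<sigma> i))"
      using sum.permute[OF \<sigma>, of "\<lambda>j. a j ^ n * u j"] by (simp add: o_def)
    also have "\<dots> = (\<Sum>i<M. a (\<sigma> i) ^ n * v' i)"
      by (simp add: u_def permutes_inverses[OF \<sigma>])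
    finally show ?thesis by simp
  qed
  have Z: "(v j - u j) * a j = 0" if j: "j < M" for j
  proof (rule vander_idx[of a "{..<M}" M "\<lambda>j. (v j - u j) * a j" j, OF inj _ _ _ ], simp, simp,
         intro allI impI)
    show "j \<in> {..<M}" using j by simp
  next
    fix p assume p: "p < M"
    have "Suc p \<in> {1..N}" using p NM by auto
    hence "(\<Sum>i<M. a i ^ Suc p * v i) = (\<Sum>j<M. a j ^ Suc p * u j)"
      using E R[of "Suc p"] by metis
    hence "(\<Sum>i<M. a i ^ Suc p * v i) - (\<Sum>j<M. a j ^ Suc p * u j) = 0" by simp
    thus "(\<Sum>i<M. (v i - u i) * a i * a i ^ p) = 0"
      by (simp add: sum_subtractf[symmetric] algebra_simps)
  qed
  show ?thesis
  proof (intro allI impI)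
    fix i assume i: "i < M"
    have "\<sigma> i < M" using permutes_in_image[OF \<sigma>, of i] i by simp
    hence "v (\<sigma> i) = u (\<sigma> i)" using Z[of "\<sigma> i"] nz by simp
    thus "v' i = v (\<sigma> i)" by (simp add: u_def permutes_inverses[OF \<sigma>])
  qed
qed

lemma perm_from_match:
  fixes a a' :: "nat \<Rightarrow> complex"
  assumes inj': "inj_on a' {..<M}" and m: "\<forall>i<M. \<exists>j<M. a j = a' i"
  shows "\<exists>\<sigma>. \<sigma> permutes {..<M} \<and> (\<forall>i<M. a' i = a (\<sigma> i))"
proof -
  define \<sigma> where "\<sigma> = (\<lambda>i. if i < M then (SOME j. j < M \<and> a j = a' i) else i)"
  have s: "\<sigma> i < M \<and> a (\<sigma> i) = a' i" if "i < M" for i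
    using someI_ex[OF m[rule_format, OF that]] that by (simp add: \<sigma>_def)
  have injs: "inj_on \<sigma> {..<M}"
    by (rule inj_onI) (metis s inj' inj_onD lessThan_iff)
  have img: "\<sigma> ` {..<M} \<subseteq> {..<M}" using s by auto
  have "\<sigma> ` {..<M} = {..<M}" by (rule endo_inj_surj[OF _ img injs]) simp
  hence "bij_betw \<sigma> {..<M} {..<M}" using injs by (simp add: bij_betw_def)
  hence "\<sigma> permutes {..<M}" by (rule bij_imp_permutes) (simp add: \<sigma>_def)
  thus ?thesis using s by auto
qed


lemma abs_mult_trig_le: fixes x K t :: real shows "\<bar>x\<bar> \<le> K \<Longrightarrow> \<bar>x * cos t\<bar> \<le> K" "\<bar>x\<bar> \<le> K \<Longrightarrow> \<bar>x * sin t\<bar> \<le> K"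
proof -
  assume "\<bar>x\<bar> \<le> K"
  have "\<bar>x\<bar> * \<bar>cos t\<bar> \<le> \<bar>x\<bar>" by (metis abs_ge_zero abs_cos_le_one abs_sin_le_one mult_left_le)
  thus "\<bar>x * cos t\<bar> \<le> K" using \<open>\<bar>x\<bar> \<le> K\<close> by (simp add: abs_mult)
  have "\<bar>x\<bar> * \<bar>sin t\<bar> \<le> \<bar>x\<bar>" by (metis abs_ge_zero abs_cos_le_one abs_sin_le_one mult_left_le)
  thus "\<bar>x * sin t\<bar> \<le> K" using \<open>\<bar>x\<bar> \<le> K\<close> by (simp add: abs_mult)
qed

lemma node_inj:
  fixes g :: "nat \<Rightarrow> real"
  assumes "c > 0" "d > 0" "fNyq > 0" "d < c / fNyq" "\<forall>i<M. \<bar>g i\<bar> \<le> fNyq/2"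
    "\<forall>i<M. \<forall>j<M. i \<noteq> j \<longrightarrow> g i \<noteq> g j"
  shows "inj_on (\<lambda>i. cis (2*pi*g i*d/c)) {..<M}"
proof (rule inj_onI)
  fix i j assume "i \<in> {..<M}" "j \<in> {..<M}" "cis (2*pi*g i*d/c) = cis (2*pi*g j*d/c)"
  hence "g i = g j" using assms by (intro phase_inj[of c d fNyq "g i" "g j"]) auto
  thus "i = j" using assms \<open>i \<in> {..<M}\<close> \<open>j \<in> {..<M}\<close> by auto
qed

lemma cis_unit: "cis t * cnj (cis t) = 1"
  by (simp add: cis_cnj cis_mult)


theorem theorem4:
  fixes P :: "'w measure" and c d fNyq B :: real and N M :: nat
    and f \<theta> :: "nat \<Rightarrow> real" and w :: "nat \<Rightarrow> int \<Rightarrow> 'w \<Rightarrow> complex"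
    and x z :: "nat \<Rightarrow> int \<Rightarrow> 'w \<Rightarrow> complex"
  assumes "prob_space P"
    and "c > 0" and "d > 0" and "fNyq > 0" and "B > 0"
    and adm: "admissible P fNyq B M f \<theta> w"
    and fnz: "\<forall>i<M. f i \<noteq> 0"
    and x_def: "\<forall>n\<in>{1..N}. \<forall>k. \<forall>\<omega>. x n k \<omega> = mat_apply M (A_x d c f \<theta>) w n k \<omega>"
    and z_def: "\<forall>n\<in>{1..N}. \<forall>k. \<forall>\<omega>. z n k \<omega> = mat_apply M (A_z d c f \<theta>) w n k \<omega>"
    and c1: "d < c / fNyq"
    and c2: "N > M"
  shows "\<forall>f' \<theta>' w'. admissible P fNyq B M f' \<theta>' w' \<and>
            (\<forall>n\<in>{1..N}. \<forall>k. \<forall>\<omega>. x n k \<omega> = mat_apply M (A_x d c f' \<theta>') w' n k \<omega>) \<and>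
            (\<forall>n\<in>{1..N}. \<forall>k. \<forall>\<omega>. z n k \<omega> = mat_apply M (A_z d c f' \<theta>') w' n k \<omega>)
          \<longrightarrow> (\<exists>\<sigma>. \<sigma> permutes {..<M} \<and>
                 (\<forall>i<M. f' i = f (\<sigma> i) \<and> \<theta>' i = \<theta> (\<sigma> i) \<and>
                         (\<forall>k \<omega>. w' i k \<omega> = w (\<sigma> i) k \<omega>)))"
proof (intro allI impI, elim conjE)
  fix f' \<theta>' w'
  assume adm': "admissible P fNyq B M f' \<theta>' w'"
    and x'_def: "\<forall>n\<in>{1..N}. \<forall>k. \<forall>\<omega>. x n k \<omega> = mat_apply M (A_x d c f' \<theta>') w' n k \<omega>"
    and z'_def: "\<forall>n\<in>{1..N}. \<forall>k. \<forall>\<omega>. z n k \<omega> = mat_apply M (A_z d c f' \<theta>') w' n k \<omega>"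
  note base = \<open>c > 0\<close> \<open>d > 0\<close> \<open>fNyq > 0\<close> c1
  have fb: "\<forall>i<M. \<bar>f i\<bar> \<le> fNyq/2" and thb: "\<forall>i<M. \<bar>\<theta> i\<bar> < pi/2"
    and dist: "\<forall>i<M. \<forall>j<M. i \<noteq> j \<longrightarrow> f i * cos (\<theta> i) \<noteq> f j * cos (\<theta> j) \<and>
        f i * sin (\<theta> i) \<noteq> f j * sin (\<theta> j)"
    and cov: "diag_nonzero_cov P M w"
    using adm unfolding admissible_def by blast+
  have fb': "\<forall>i<M. \<bar>f' i\<bar> \<le> fNyq/2" and thb': "\<forall>i<M. \<bar>\<theta>' i\<bar> < pi/2"
    and dist': "\<forall>i<M. \<forall>j<M. i \<noteq> j \<longrightarrow> f' i * cos (\<theta>' i) \<noteq> f' j * cos (\<theta>' j) \<and>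
        f' i * sin (\<theta>' i) \<noteq> f' j * sin (\<theta>' j)"
    and cov': "diag_nonzero_cov P M w'"
    using adm' unfolding admissible_def by blast+
  define ax where "ax = (\<lambda>i. cis (2*pi*(f i * cos (\<theta> i))*d/c))"
  define ax' where "ax' = (\<lambda>i. cis (2*pi*(f' i * cos (\<theta>' i))*d/c))"
  define bz where "bz = (\<lambda>i. cis (2*pi*(f i * sin (\<theta> i))*d/c))"
  define bz' where "bz' = (\<lambda>i. cis (2*pi*(f' i * sin (\<theta>' i))*d/c))"
  have c0: "c \<noteq> 0" using base by simp
  have Ax: "A_x d c f \<theta> n i = ax i ^ n" "A_x d c f' \<theta>' n i = ax' i ^ n"
    "A_z d c f \<theta> n i = bz i ^ n" "A_z d c f' \<theta>' n i = bz' i ^ n" for n i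
    by (simp_all add: A_x_pow A_z_pow c0 ax_def ax'_def bz_def bz'_def)
  have fcb: "\<forall>i<M. \<bar>f i * cos (\<theta> i)\<bar> \<le> fNyq/2" "\<forall>i<M. \<bar>f i * sin (\<theta> i)\<bar> \<le> fNyq/2"
    "\<forall>i<M. \<bar>f' i * cos (\<theta>' i)\<bar> \<le> fNyq/2" "\<forall>i<M. \<bar>f' i * sin (\<theta>' i)\<bar> \<le> fNyq/2"
    using fb fb' abs_mult_trig_le by blast+
  have injax: "inj_on ax {..<M}" unfolding ax_def
    by (rule node_inj[OF base]) (use fcb dist in auto)
  have injax': "inj_on ax' {..<M}" unfolding ax'_def
    by (rule node_inj[OF base]) (use fcb dist' in auto)
  have injbz: "inj_on bz {..<M}" unfolding bz_def
    by (rule node_inj[OF base]) (use fcb dist in auto)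
  have injbz': "inj_on bz' {..<M}" unfolding bz'_def
    by (rule node_inj[OF base]) (use fcb dist' in auto)
  have unit: "\<forall>i. ax i * cnj (ax i) = 1" "\<forall>i. ax' i * cnj (ax' i) = 1"
    "\<forall>i. bz i * cnj (bz i) = 1" "\<forall>i. bz' i * cnj (bz' i) = 1"
    by (simp_all add: ax_def ax'_def bz_def bz'_def cis_unit)
  have nz: "\<forall>i. ax i \<noteq> 0" "\<forall>i. bz i \<noteq> 0"
    by (simp_all add: ax_def bz_def)
  define D where "D = (\<lambda>i. \<integral>\<omega>. w i 0 \<omega> * cnj (w i 0 \<omega>) \<partial>P)"
  define D' where "D' = (\<lambda>i. \<integral>\<omega>. w' i 0 \<omega> * cnj (w' i 0 \<omega>) \<partial>P)"
  have D'nz: "\<forall>i<M. D' i \<noteq> 0" using cov' unfolding diag_nonzero_cov_def D'_def by blast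
  have Ex: "\<forall>n\<in>{1..N}. \<forall>m\<in>{1..N}. (\<Sum>i<M. ax i ^ n * cnj (ax i ^ m) * D i)
                                   = (\<Sum>i<M. ax' i ^ n * cnj (ax' i ^ m) * D' i)"
  proof (intro ballI)
    fix n m assume nm: "n \<in> {1..N}" "m \<in> {1..N}"
    have "(\<lambda>\<omega>. x n 0 \<omega> * cnj (x m 0 \<omega>)) = (\<lambda>\<omega>. mat_apply M (A_x d c f \<theta>) w n 0 \<omega> *
            cnj (mat_apply M (A_x d c f \<theta>) w m 0 \<omega>))" using x_def nm by simp
    moreover have "(\<lambda>\<omega>. x n 0 \<omega> * cnj (x m 0 \<omega>)) = (\<lambda>\<omega>. mat_apply M (A_x d c f' \<theta>') w' n 0 \<omega> *
            cnj (mat_apply M (A_x d c f' \<theta>') w' m 0 \<omega>))" using x'_def nm by simp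
    ultimately show "(\<Sum>i<M. ax i ^ n * cnj (ax i ^ m) * D i)
                                   = (\<Sum>i<M. ax' i ^ n * cnj (ax' i ^ m) * D' i)"
      using cov_lemma[OF cov, of "A_x d c f \<theta>" n 0 "A_x d c f \<theta>" m]
        cov_lemma[OF cov', of "A_x d c f' \<theta>'" n 0 "A_x d c f' \<theta>'" m]
      by (simp add: Ax D_def D'_def)
  qed
  have Ez: "\<forall>n\<in>{1..N}. \<forall>m\<in>{1..N}. (\<Sum>i<M. bz i ^ n * cnj (bz i ^ m) * D i)
                                   = (\<Sum>i<M. bz' i ^ n * cnj (bz' i ^ m) * D' i)"
  proof (intro ballI)
    fix n m assume nm: "n \<in> {1..N}" "m \<in> {1..N}"
    have "(\<lambda>\<omega>. z n 0 \<omega> * cnj (z m 0 \<omega>)) = (\<lambda>\<omega>. mat_apply M (A_z d c f \<theta>) w n 0 \<omega> *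
            cnj (mat_apply M (A_z d c f \<theta>) w m 0 \<omega>))" using z_def nm by simp
    moreover have "(\<lambda>\<omega>. z n 0 \<omega> * cnj (z m 0 \<omega>)) = (\<lambda>\<omega>. mat_apply M (A_z d c f' \<theta>') w' n 0 \<omega> *
            cnj (mat_apply M (A_z d c f' \<theta>') w' m 0 \<omega>))" using z'_def nm by simp
    ultimately show "(\<Sum>i<M. bz i ^ n * cnj (bz i ^ m) * D i)
                                   = (\<Sum>i<M. bz' i ^ n * cnj (bz' i ^ m) * D' i)"
      using cov_lemma[OF cov, of "A_z d c f \<theta>" n 0 "A_z d c f \<theta>" m]
        cov_lemma[OF cov', of "A_z d c f' \<theta>'" n 0 "A_z d c f' \<theta>'" m]
      by (simp add: Ax D_def D'_def)
  qed
  obtain \<sigma> where \<sigma>: "\<sigma> permutes {..<M}" and s\<sigma>: "\<forall>i<M. ax' i = ax (\<sigma> i)"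
    using perm_from_match[OF injax' match_nodes[OF injax injax' unit(1,2) c2 D'nz Ex]] by blast
  obtain \<tau> where \<tau>: "\<tau> permutes {..<M}" and s\<tau>: "\<forall>i<M. bz' i = bz (\<tau> i)"
    using perm_from_match[OF injbz' match_nodes[OF injbz injbz' unit(3,4) c2 D'nz Ez]] by blast
  have w\<sigma>: "\<forall>i<M. w' i k \<omega> = w (\<sigma> i) k \<omega>" for k \<omega>
  proof (rule w_ident[OF injax nz(1) \<sigma>, of N "\<lambda>i. w i k \<omega>" "\<lambda>i. w' i k \<omega>"])
    show "M \<le> N" using c2 by simp
    show "\<forall>n\<in>{1..N}. (\<Sum>i<M. ax i ^ n * w i k \<omega>) = (\<Sum>i<M. ax (\<sigma> i) ^ n * w' i k \<omega>)"
    proof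
      fix n assume n: "n \<in> {1..N}"
      have "(\<Sum>i<M. ax i ^ n * w i k \<omega>) = x n k \<omega>" using x_def n by (simp add: mat_apply_def Ax)
      also have "\<dots> = (\<Sum>i<M. ax' i ^ n * w' i k \<omega>)" using x'_def n by (simp add: mat_apply_def Ax)
      also have "\<dots> = (\<Sum>i<M. ax (\<sigma> i) ^ n * w' i k \<omega>)" using s\<sigma> by simp
      finally show "(\<Sum>i<M. ax i ^ n * w i k \<omega>) = (\<Sum>i<M. ax (\<sigma> i) ^ n * w' i k \<omega>)" .
    qed
  qed
  have w\<tau>: "\<forall>i<M. w' i k \<omega> = w (\<tau> i) k \<omega>" for k \<omega>
  proof (rule w_ident[OF injbz nz(2) \<tau>, of N "\<lambda>i. w i k \<omega>" "\<lambda>i. w' i k \<omega>"])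
    show "M \<le> N" using c2 by simp
    show "\<forall>n\<in>{1..N}. (\<Sum>i<M. bz i ^ n * w i k \<omega>) = (\<Sum>i<M. bz (\<tau> i) ^ n * w' i k \<omega>)"
    proof
      fix n assume n: "n \<in> {1..N}"
      have "(\<Sum>i<M. bz i ^ n * w i k \<omega>) = z n k \<omega>" using z_def n by (simp add: mat_apply_def Ax)
      also have "\<dots> = (\<Sum>i<M. bz' i ^ n * w' i k \<omega>)" using z'_def n by (simp add: mat_apply_def Ax)
      also have "\<dots> = (\<Sum>i<M. bz (\<tau> i) ^ n * w' i k \<omega>)" using s\<tau> by simp
      finally show "(\<Sum>i<M. bz i ^ n * w i k \<omega>) = (\<Sum>i<M. bz (\<tau> i) ^ n * w' i k \<omega>)" .
    qed
  qed
  have st: "\<tau> i = \<sigma> i" if i: "i < M" for i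
  proof (rule ccontr)
    assume ne: "\<tau> i \<noteq> \<sigma> i"
    have si: "\<sigma> i < M" using permutes_in_image[OF \<sigma>, of i] i by simp
    have ti: "\<tau> i < M" using permutes_in_image[OF \<tau>, of i] i by simp
    have "(\<integral>\<omega>. w (\<sigma> i) 0 \<omega> * cnj (w (\<tau> i) 0 \<omega>) \<partial>P) = 0"
      using cov si ti ne unfolding diag_nonzero_cov_def by metis
    moreover have "(\<integral>\<omega>. w (\<sigma> i) 0 \<omega> * cnj (w (\<sigma> i) 0 \<omega>) \<partial>P) \<noteq> 0"
      using cov si unfolding diag_nonzero_cov_def by metis
    moreover have "\<And>\<omega>. w (\<tau> i) 0 \<omega> = w (\<sigma> i) 0 \<omega>" using w\<sigma> w\<tau> i by metis
    ultimately show False by simp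
  qed
  show "\<exists>\<sigma>. \<sigma> permutes {..<M} \<and>
                 (\<forall>i<M. f' i = f (\<sigma> i) \<and> \<theta>' i = \<theta> (\<sigma> i) \<and>
                         (\<forall>k \<omega>. w' i k \<omega> = w (\<sigma> i) k \<omega>))"
  proof (intro exI conjI allI impI)
    show "\<sigma> permutes {..<M}" by (rule \<sigma>)
    fix i assume i: "i < M"
    have si: "\<sigma> i < M" using permutes_in_image[OF \<sigma>, of i] i by simp
    have cc: "f (\<sigma> i) * cos (\<theta> (\<sigma> i)) = f' i * cos (\<theta>' i)"
      by (rule phase_inj[OF base]) (use fcb si i s\<sigma> in \<open>auto simp: ax_def ax'_def\<close>)
    have ss: "f (\<sigma> i) * sin (\<theta> (\<sigma> i)) = f' i * sin (\<theta>' i)"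
      by (rule phase_inj[OF base]) (use fcb si i s\<tau> st in \<open>auto simp: bz_def bz'_def\<close>)
    have "f (\<sigma> i) = f' i \<and> \<theta> (\<sigma> i) = \<theta>' i"
      by (rule polar_unique) (use fnz si thb thb' i cc ss in auto)
    thus "f' i = f (\<sigma> i)" "\<theta>' i = \<theta> (\<sigma> i)" by simp_all
    fix k \<omega> show "w' i k \<omega> = w (\<sigma> i) k \<omega>" using w\<sigma> i by simp
  qed
qed

end
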